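(* $17\notin\operatorname{Spec}(32_{65})$.
   Context: $32_{65}$ is the finite integral symmetric relation algebra with atoms $1'$, $a$, $b$, $c$, all symmetric, in which a diversity cycle $xyz$ (with $x,y,z\in\{a,b,c\}$) is mandatory (i.e. $x;y\ge z$) if it involves $a$ and forbidden (i.e. $x;y\cdot z=0$) otherwise. A representation over a set $U$ is an embedding into the full relation algebra on $U\times U$. $\operatorname{Spec}(A)$ is the set of cardinals $\alpha\le\omega$ such that $A$ has a representation over a set of cardinality $\alpha$. *)

theory Defs
  imports Main
begin

datatype atom = One | At_a | At_b | At_c

text \<open>All atoms are symmetric.  For diversity atoms x y z, the cycle xyz is mandatory
  (x;y \<ge> z) iff it involves a, and forbidden otherwise.  x;y \<ge> 1' iff y = x (converse of x).\<close>
fun atom_comp :: "atom \<Rightarrow> atom \<Rightarrow> atom set" where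
  "atom_comp One y = {y}"
| "atom_comp x One = {x}"
| "atom_comp x y =
     {z. (z = One \<and> x = y) \<or>
         (z \<noteq> One \<and> (x = At_a \<or> y = At_a \<or> z = At_a))}"

text \<open>The (complex) algebra: elements are sets of atoms.\<close>
definition ra_comp :: "atom set \<Rightarrow> atom set \<Rightarrow> atom set" where
  "ra_comp S T = (\<Union>x\<in>S. \<Union>y\<in>T. atom_comp x y)"

definition ra_conv :: "atom set \<Rightarrow> atom set" where
  "ra_conv S = S"

definition ra_id :: "atom set" where
  "ra_id = {One}"

definition representation :: "'u set \<Rightarrow> (atom set \<Rightarrow> ('u \<times> 'u) set) \<Rightarrow> bool" where
  "representation U h \<longleftrightarrow>
     inj h \<and>
     (\<forall>S. h S \<subseteq> U \<times> U) \<and>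
     (\<forall>S T. h (S \<union> T) = h S \<union> h T) \<and>
     (\<forall>S. h (- S) = (U \<times> U) - h S) \<and>
     (\<forall>S T. h (ra_comp S T) = h S O h T) \<and>
     (\<forall>S. h (ra_conv S) = converse (h S)) \<and>
     h ra_id = Id_on U"

text \<open>Finite part of the spectrum: sizes n of finite sets over which 32_65 is representable
  (any finite set is in bijection with a set of naturals of the same size).\<close>
definition spec_fin :: "nat set" where
  "spec_fin = {n. \<exists>(U::nat set) h. finite U \<and> card U = n \<and> representation U h}"

end

theory Submission
  imports Defs
begin

lemma card_ge4:
  fixes X Y A :: "('u \<times> 'u) set"
  assumes fin: "finite U"
    and XU: "X \<subseteq> U \<times> U" and YU: "Y \<subseteq> U \<times> U" and AU: "A \<subseteq> U \<times> U"
    and symX: "\<And>u v. (u,v) \<in> X \<Longrightarrow> (v,u) \<in> X"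
    and symY: "\<And>u v. (u,v) \<in> Y \<Longrightarrow> (v,u) \<in> Y"
    and symA: "\<And>u v. (u,v) \<in> A \<Longrightarrow> (v,u) \<in> A"
    and dXY: "X \<inter> Y = {}" and dXA: "X \<inter> A = {}" and dYA: "Y \<inter> A = {}"
    and part: "\<And>u v. u \<in> U \<Longrightarrow> v \<in> U \<Longrightarrow> u \<noteq> v \<Longrightarrow> (u,v) \<in> X \<union> Y \<union> A"
    and tri: "\<And>u v w. (u,v) \<in> X \<union> Y \<Longrightarrow> (v,w) \<in> X \<union> Y \<Longrightarrow> (u,w) \<notin> X \<union> Y"
    and AA: "\<And>u. u \<in> U \<Longrightarrow> \<exists>w. (u,w) \<in> A"
    and AXX: "\<And>u v. (u,v) \<in> A \<Longrightarrow> \<exists>k. (u,k) \<in> X \<and> (k,v) \<in> X"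
    and AYY: "\<And>u v. (u,v) \<in> A \<Longrightarrow> \<exists>k. (u,k) \<in> Y \<and> (k,v) \<in> Y"
    and AXY: "\<And>u v. (u,v) \<in> A \<Longrightarrow> \<exists>k. (u,k) \<in> X \<and> (k,v) \<in> Y"
    and AAX: "\<And>u v. (u,v) \<in> A \<Longrightarrow> \<exists>k. (u,k) \<in> A \<and> (k,v) \<in> X"
    and xU: "x \<in> U"
  shows "4 \<le> card {y. (x,y) \<in> X}"
proof -
  obtain w where xw: "(x,w) \<in> A" using AA xU by blast
  obtain k1 where k1: "(x,k1) \<in> X" "(k1,w) \<in> X" using AXX[OF xw] by blast
  obtain k2 where k2: "(x,k2) \<in> X" "(k2,w) \<in> Y" using AXY[OF xw] by blast
  have k12: "k1 \<noteq> k2" using k1 k2 dXY by blast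
  have k1U: "k1 \<in> U" and k2U: "k2 \<in> U" using k1 k2 XU by auto
  have "(k1,x) \<in> X \<union> Y" using symX k1 by blast
  hence "(k1,k2) \<notin> X \<union> Y" using tri k2 by blast
  hence k12A: "(k1,k2) \<in> A" using part[OF k1U k2U k12] by blast
  obtain w' where w': "(k1,w') \<in> Y" "(w',k2) \<in> Y" using AYY[OF k12A] by blast
  have w'U: "w' \<in> U" using w' YU by auto
  have xw': "x \<noteq> w'" using k1 w' dXY symX by blast
  have "(x,w') \<notin> X \<union> Y" using tri[of x k1 w'] k1 w' by blast
  hence xw'A: "(x,w') \<in> A" using part[OF xU w'U xw'] by blast
  obtain k3 where k3: "(x,k3) \<in> X" "(k3,w') \<in> X" using AXX[OF xw'A] by blast
  obtain k4 where k4: "(w',k4) \<in> A" "(k4,x) \<in> X" using AAX[OF symA[OF xw'A]] by blast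
  have k4x: "(x,k4) \<in> X" using symX k4 by blast
  have d13: "k1 \<noteq> k3" using k3 w' dXY by blast
  have d23: "k2 \<noteq> k3" using k3 w' dXY symY by blast
  have d14: "k1 \<noteq> k4" using k4 w' dYA symY by blast
  have d24: "k2 \<noteq> k4" using k4 w' dYA by blast
  have d34: "k3 \<noteq> k4" using k3 k4 dXA symX by blast
  have sub: "{k1,k2,k3,k4} \<subseteq> {y. (x,y) \<in> X}" using k1 k2 k3 k4x by auto
  have finP: "finite {y. (x,y) \<in> X}"
    by (rule finite_subset[OF _ fin]) (use XU in auto)
  have "card {k1,k2,k3,k4} = 4" using k12 d13 d23 d14 d24 d34 by auto
  thus ?thesis using card_mono[OF finP sub] by simp
qed

lemma arith17:
  fixes p q r :: nat
  assumes "4 \<le> p" "4 \<le> q" "17 = 1 + p + q + r" "7 * p \<le> r * (p - 1)"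
  shows False
proof -
  have "r \<le> 12 - p" "p \<le> 12" using assms by auto
  hence "r * (p - 1) \<le> (12 - p) * (p - 1)" by (intro mult_right_mono) auto
  moreover have "(12 - p) * (p - 1) < 7 * p"
  proof -
    have "p \<in> {4..12}" using assms \<open>p \<le> 12\<close> by auto
    hence "p = 4 \<or> p = 5 \<or> p = 6 \<or> p = 7 \<or> p = 8 \<or> p = 9 \<or> p = 10 \<or> p = 11 \<or> p = 12"
      by auto
    thus ?thesis by auto
  qed
  ultimately show False using assms(4) by linarith
qed

lemma core17:
  fixes X Y A :: "('u \<times> 'u) set"
  assumes fin: "finite U" and c17: "card U = 17"
    and XU: "X \<subseteq> U \<times> U" and YU: "Y \<subseteq> U \<times> U" and AU: "A \<subseteq> U \<times> U"
    and symX: "\<And>u v. (u,v) \<in> X \<Longrightarrow> (v,u) \<in> X"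
    and symY: "\<And>u v. (u,v) \<in> Y \<Longrightarrow> (v,u) \<in> Y"
    and symA: "\<And>u v. (u,v) \<in> A \<Longrightarrow> (v,u) \<in> A"
    and irrX: "\<And>u. (u,u) \<notin> X" and irrY: "\<And>u. (u,u) \<notin> Y" and irrA: "\<And>u. (u,u) \<notin> A"
    and dXY: "X \<inter> Y = {}" and dXA: "X \<inter> A = {}" and dYA: "Y \<inter> A = {}"
    and part: "\<And>u v. u \<in> U \<Longrightarrow> v \<in> U \<Longrightarrow> u \<noteq> v \<Longrightarrow> (u,v) \<in> X \<union> Y \<union> A"
    and tri: "\<And>u v w. (u,v) \<in> X \<union> Y \<Longrightarrow> (v,w) \<in> X \<union> Y \<Longrightarrow> (u,w) \<notin> X \<union> Y"
    and AA: "\<And>u. u \<in> U \<Longrightarrow> \<exists>w. (u,w) \<in> A"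
    and AXX: "\<And>u v. (u,v) \<in> A \<Longrightarrow> \<exists>k. (u,k) \<in> X \<and> (k,v) \<in> X"
    and AYY: "\<And>u v. (u,v) \<in> A \<Longrightarrow> \<exists>k. (u,k) \<in> Y \<and> (k,v) \<in> Y"
    and AXY: "\<And>u v. (u,v) \<in> A \<Longrightarrow> \<exists>k. (u,k) \<in> X \<and> (k,v) \<in> Y"
    and AYX: "\<And>u v. (u,v) \<in> A \<Longrightarrow> \<exists>k. (u,k) \<in> Y \<and> (k,v) \<in> X"
    and AAX: "\<And>u v. (u,v) \<in> A \<Longrightarrow> \<exists>k. (u,k) \<in> A \<and> (k,v) \<in> X"
    and AAY: "\<And>u v. (u,v) \<in> A \<Longrightarrow> \<exists>k. (u,k) \<in> A \<and> (k,v) \<in> Y"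
  shows False
proof -
  have geX: "4 \<le> card {y. (z,y) \<in> X}" if "z \<in> U" for z
    by (rule card_ge4[OF fin XU YU AU symX symY symA dXY dXA dYA part tri AA AXX AYY AXY AAX that])
  have geY: "4 \<le> card {y. (z,y) \<in> Y}" if "z \<in> U" for z
  proof (rule card_ge4[OF fin YU XU AU symY symX symA _ dYA dXA _ _ AA AYY AXX AYX AAY that])
    show "Y \<inter> X = {}" using dXY by blast
    show "\<And>u v. u \<in> U \<Longrightarrow> v \<in> U \<Longrightarrow> u \<noteq> v \<Longrightarrow> (u,v) \<in> Y \<union> X \<union> A" using part by blast
    show "\<And>u v w. (u,v) \<in> Y \<union> X \<Longrightarrow> (v,w) \<in> Y \<union> X \<Longrightarrow> (u,w) \<notin> Y \<union> X" using tri by blast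
  qed
  have "U \<noteq> {}" using c17 by auto
  then obtain x where xU: "x \<in> U" by blast
  define P where "P = {y. (x,y) \<in> X}"
  define Q where "Q = {y. (x,y) \<in> Y}"
  define R where "R = {y. (x,y) \<in> A}"
  define G where "G = X \<union> Y"
  have PU: "P \<subseteq> U" and QU: "Q \<subseteq> U" and RU: "R \<subseteq> U"
    using XU YU AU unfolding P_def Q_def R_def by auto
  have finP: "finite P" using PU fin by (rule finite_subset)
  have finQ: "finite Q" using QU fin by (rule finite_subset)
  have finR: "finite R" using RU fin by (rule finite_subset)
  have p4: "4 \<le> card P" using geX[OF xU] P_def by simp
  have q4: "4 \<le> card Q" using geY[OF xU] Q_def by simp
  have Ueq: "U = insert x (P \<union> Q \<union> R)"
  proof
    show "U \<subseteq> insert x (P \<union> Q \<union> R)"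
    proof
      fix v assume "v \<in> U"
      thus "v \<in> insert x (P \<union> Q \<union> R)"
        using part[OF xU, of v] unfolding P_def Q_def R_def by blast
    qed
    show "insert x (P \<union> Q \<union> R) \<subseteq> U" using xU PU QU RU by blast
  qed
  have "card U = 1 + card P + card Q + card R"
  proof -
    have "x \<notin> P \<union> Q \<union> R" using irrX irrY irrA unfolding P_def Q_def R_def by blast
    hence "card U = Suc (card (P \<union> Q \<union> R))"
      using Ueq finP finQ finR by simp
    moreover have "card (P \<union> Q \<union> R) = card (P \<union> Q) + card R"
      by (rule card_Un_disjoint) (use finP finQ finR dXA dYA in \<open>auto simp: P_def Q_def R_def\<close>)
    moreover have "card (P \<union> Q) = card P + card Q"
      by (rule card_Un_disjoint) (use finP finQ dXY in \<open>auto simp: P_def Q_def\<close>)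
    ultimately show ?thesis by simp
  qed
  hence c: "17 = 1 + card P + card Q + card R" using c17 by simp
  have lowD: "7 \<le> card (R \<inter> {w. (y,w) \<in> G})" if yP: "y \<in> P" for y
  proof -
    have yU: "y \<in> U" using yP PU by blast
    have xy: "(x,y) \<in> G" using yP unfolding P_def G_def by blast
    have sub: "({w. (y,w) \<in> X} \<union> {w. (y,w) \<in> Y}) - {x} \<subseteq> R \<inter> {w. (y,w) \<in> G}"
    proof
      fix v assume v: "v \<in> ({w. (y,w) \<in> X} \<union> {w. (y,w) \<in> Y}) - {x}"
      hence yv: "(y,v) \<in> G" and vx: "v \<noteq> x" unfolding G_def by auto
      have vU: "v \<in> U" using yv XU YU unfolding G_def by auto
      have "(x,v) \<notin> X \<union> Y" using tri xy yv unfolding G_def by blast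
      hence "(x,v) \<in> A" using part[OF xU vU] vx by blast
      thus "v \<in> R \<inter> {w. (y,w) \<in> G}" using yv unfolding R_def by blast
    qed
    have f1: "finite {w. (y,w) \<in> X}" by (rule finite_subset[OF _ fin]) (use XU in auto)
    have f2: "finite {w. (y,w) \<in> Y}" by (rule finite_subset[OF _ fin]) (use YU in auto)
    have "card ({w. (y,w) \<in> X} \<union> {w. (y,w) \<in> Y}) = card {w. (y,w) \<in> X} + card {w. (y,w) \<in> Y}"
      by (rule card_Un_disjoint[OF f1 f2]) (use dXY in auto)
    hence "8 \<le> card ({w. (y,w) \<in> X} \<union> {w. (y,w) \<in> Y})" using geX[OF yU] geY[OF yU] by simp
    moreover have "card ({w. (y,w) \<in> X} \<union> {w. (y,w) \<in> Y}) \<le> Suc (card (({w. (y,w) \<in> X} \<union> {w. (y,w) \<in> Y}) - {x}))"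
      using f1 f2 by (auto simp add: card_Diff_singleton_if)
    moreover have "card (({w. (y,w) \<in> X} \<union> {w. (y,w) \<in> Y}) - {x}) \<le> card (R \<inter> {w. (y,w) \<in> G})"
      by (rule card_mono) (use finR sub in auto)
    ultimately show ?thesis by linarith
  qed
  have upE: "card (P \<inter> {y. (y,w) \<in> G}) \<le> card P - 1" if wR: "w \<in> R" for w
  proof -
    have "(w,x) \<in> A" using wR symA unfolding R_def by blast
    then obtain k where k: "(w,k) \<in> A" "(k,x) \<in> X" using AAX by blast
    have kP: "k \<in> P" using k symX unfolding P_def by blast
    have "P \<inter> {y. (y,w) \<in> G} \<subseteq> P - {k}"
      using k dXA dYA symA unfolding G_def by blast
    hence "card (P \<inter> {y. (y,w) \<in> G}) \<le> card (P - {k})" by (intro card_mono) (use finP in auto)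
    also have "\<dots> = card P - 1" using kP finP by simp
    finally show ?thesis .
  qed
  have dc: "(\<Sum>y\<in>P. card (R \<inter> {w. (y,w) \<in> G})) = (\<Sum>w\<in>R. card (P \<inter> {y. (y,w) \<in> G}))"
  proof -
    have "(\<Sum>y\<in>P. card (R \<inter> {w. (y,w) \<in> G})) = (\<Sum>y\<in>P. \<Sum>w\<in>R. of_bool ((y,w) \<in> G))"
      using finR by (simp add: sum_of_bool_eq)
    also have "\<dots> = (\<Sum>w\<in>R. \<Sum>y\<in>P. of_bool ((y,w) \<in> G))" by (rule sum.swap)
    also have "\<dots> = (\<Sum>w\<in>R. card (P \<inter> {y. (y,w) \<in> G}))"
      using finP by (simp add: sum_of_bool_eq)
    finally show ?thesis .
  qed
  have "7 * card P \<le> (\<Sum>y\<in>P. card (R \<inter> {w. (y,w) \<in> G}))"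
    using sum_mono[of P "\<lambda>_. 7" "\<lambda>y. card (R \<inter> {w. (y,w) \<in> G})"] lowD by simp
  also have "\<dots> \<le> (\<Sum>w\<in>R. card P - 1)"
    unfolding dc by (rule sum_mono) (rule upE)
  also have "\<dots> = card R * (card P - 1)" by simp
  finally have "7 * card P \<le> card R * (card P - 1)" .
  thus False using arith17[OF p4 q4 c] by blast
qed

lemma rep_facts:
  assumes rep: "representation U h"
  shows rep_sub: "h S \<subseteq> U \<times> U"
    and rep_mono: "S \<subseteq> T \<Longrightarrow> h S \<subseteq> h T"
    and rep_disj: "S \<inter> T = {} \<Longrightarrow> h S \<inter> h T = {}"
    and rep_sym: "(u,v) \<in> h S \<Longrightarrow> (v,u) \<in> h S"
    and rep_comp: "h {x} O h {y} = h (atom_comp x y)"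
    and rep_id: "h {One} = Id_on U"
    and rep_un: "h (S \<union> T) = h S \<union> h T"
    and rep_compl: "h (- S) = (U \<times> U) - h S"
proof -
  have un: "\<And>S T. h (S \<union> T) = h S \<union> h T" and cm: "\<And>S. h (- S) = (U \<times> U) - h S"
    and sb: "\<And>S. h S \<subseteq> U \<times> U"
    and co: "\<And>S T. h (ra_comp S T) = h S O h T"
    and cv: "\<And>S. h (ra_conv S) = converse (h S)" and idd: "h ra_id = Id_on U"
    using rep unfolding representation_def by auto
  show "h S \<subseteq> U \<times> U" by (rule sb)
  show "h (S \<union> T) = h S \<union> h T" by (rule un)
  show mono: "S \<subseteq> T \<Longrightarrow> h S \<subseteq> h T" for S T
    using un[of S T] by (simp add: sup.absorb2 Un_absorb1 sup_commute) (metis Un_upper1)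
  show "S \<inter> T = {} \<Longrightarrow> h S \<inter> h T = {}"
  proof -
    assume "S \<inter> T = {}"
    hence "S \<subseteq> - T" by blast
    hence "h S \<subseteq> h (- T)" by (rule mono)
    thus "h S \<inter> h T = {}" using cm[of T] by blast
  qed
  show "(u,v) \<in> h S \<Longrightarrow> (v,u) \<in> h S"
    using cv[of S] unfolding ra_conv_def by blast
  show "h {x} O h {y} = h (atom_comp x y)"
    using co[of "{x}" "{y}"] unfolding ra_comp_def by simp
  show "h {One} = Id_on U" using idd unfolding ra_id_def .
  show "h (- S) = (U \<times> U) - h S" by (rule cm)
qed

lemma comp_values:
  "atom_comp At_b At_b = {One, At_a}" "atom_comp At_c At_c = {One, At_a}"
  "atom_comp At_b At_c = {At_a}" "atom_comp At_c At_b = {At_a}"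
  "At_a \<in> atom_comp At_a At_b" "At_a \<in> atom_comp At_a At_c"
  "One \<in> atom_comp At_a At_a"
  by auto

lemma comp_sub: "x1 \<in> {At_b, At_c} \<Longrightarrow> x2 \<in> {At_b, At_c} \<Longrightarrow> atom_comp x1 x2 \<subseteq> {One, At_a}"
  apply (simp only: insert_iff empty_iff)
  apply (elim disjE)
  apply (simp_all only: comp_values(1-4))
  apply auto
  done

lemma rep_in_comp:
  assumes rep: "representation U h" and z: "z \<in> atom_comp x y" and uv: "(u,v) \<in> h {z}"
  shows "\<exists>k. (u,k) \<in> h {x} \<and> (k,v) \<in> h {y}"
proof -
  have "h {z} \<subseteq> h (atom_comp x y)" using z by (intro rep_mono[OF rep]) auto
  hence "(u,v) \<in> h {x} O h {y}" using uv rep_comp[OF rep] by auto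
  thus ?thesis by blast
qed

lemma no_rep17:
  assumes fin: "finite U" and c17: "card U = 17" and rep: "representation U h"
  shows False
proof -
  define X where "X = h {At_b}"
  define Y where "Y = h {At_c}"
  define A where "A = h {At_a}"
  have empty: "h {} = {}" using rep_disj[OF rep, of "{}" "{}"] by simp
  have univ: "h UNIV = U \<times> U" using rep_compl[OF rep, of "{}"] empty by simp
  have UNIVeq: "(UNIV :: atom set) = {One} \<union> {At_a} \<union> {At_b} \<union> {At_c}"
  proof -
    have "z = One \<or> z = At_a \<or> z = At_b \<or> z = At_c" for z by (cases z) auto
    thus ?thesis by blast
  qed
  have hall: "U \<times> U = h {One} \<union> A \<union> X \<union> Y"
    using univ unfolding UNIVeq rep_un[OF rep] A_def X_def Y_def by simp
  have irr: "(u,u) \<notin> h {z}" if "z \<noteq> One" for u z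
  proof
    assume a: "(u,u) \<in> h {z}"
    hence "u \<in> U" using rep_sub[OF rep, of "{z}"] by auto
    hence "(u,u) \<in> h {One}" using rep_id[OF rep] by auto
    moreover have "h {z} \<inter> h {One} = {}" using that by (intro rep_disj[OF rep]) auto
    ultimately show False using a by blast
  qed
  have disj: "h {z1} \<inter> h {z2} = {}" if "z1 \<noteq> z2" for z1 z2
    using that by (intro rep_disj[OF rep]) auto
  have tri0: "(u,w) \<in> h {One, At_a}"
    if "(u,v) \<in> h {x1}" "(v,w) \<in> h {x2}" "x1 \<in> {At_b, At_c}" "x2 \<in> {At_b, At_c}" for u v w x1 x2
  proof -
    have "(u,w) \<in> h {x1} O h {x2}" using that(1,2) by (rule relcompI)
    hence uw: "(u,w) \<in> h (atom_comp x1 x2)" using rep_comp[OF rep, of x1 x2] by simp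
    have "atom_comp x1 x2 \<subseteq> {One, At_a}" using that(3,4) by (rule comp_sub)
    hence "h (atom_comp x1 x2) \<subseteq> h {One, At_a}" by (rule rep_mono[OF rep])
    thus ?thesis using uw by (rule subsetD)
  qed
  have hOA: "h {One, At_a} = h {One} \<union> h {At_a}"
  proof -
    have "{One, At_a} = {One} \<union> {At_a}" by auto
    thus ?thesis using rep_un[OF rep, of "{One}" "{At_a}"] by simp
  qed
  have sub: "X \<subseteq> U \<times> U" "Y \<subseteq> U \<times> U" "A \<subseteq> U \<times> U"
    unfolding X_def Y_def A_def by (rule rep_sub[OF rep])+
  have sym: "\<And>u v. (u,v) \<in> X \<Longrightarrow> (v,u) \<in> X" "\<And>u v. (u,v) \<in> Y \<Longrightarrow> (v,u) \<in> Y"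
    "\<And>u v. (u,v) \<in> A \<Longrightarrow> (v,u) \<in> A"
    unfolding X_def Y_def A_def by (rule rep_sym[OF rep]; assumption)+
  have irrs: "\<And>u. (u,u) \<notin> X" "\<And>u. (u,u) \<notin> Y" "\<And>u. (u,u) \<notin> A"
    unfolding X_def Y_def A_def by (rule irr; simp)+
  have disjs: "X \<inter> Y = {}" "X \<inter> A = {}" "Y \<inter> A = {}"
    unfolding X_def Y_def A_def by (rule disj; simp)+
  have part: "\<And>u v. u \<in> U \<Longrightarrow> v \<in> U \<Longrightarrow> u \<noteq> v \<Longrightarrow> (u,v) \<in> X \<union> Y \<union> A"
  proof -
    fix u v assume "u \<in> U" "v \<in> U" "u \<noteq> v"
    hence "(u,v) \<in> h {One} \<union> A \<union> X \<union> Y" using hall by blast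
    moreover have "(u,v) \<notin> h {One}" using rep_id[OF rep] \<open>u \<noteq> v\<close> by auto
    ultimately show "(u,v) \<in> X \<union> Y \<union> A" by blast
  qed
  have tri: "\<And>u v w. (u,v) \<in> X \<union> Y \<Longrightarrow> (v,w) \<in> X \<union> Y \<Longrightarrow> (u,w) \<notin> X \<union> Y"
  proof -
    fix u v w assume a: "(u,v) \<in> X \<union> Y" "(v,w) \<in> X \<union> Y"
    obtain x1 where x1: "(u,v) \<in> h {x1}" "x1 \<in> {At_b, At_c}"
      using a(1) unfolding X_def Y_def by blast
    obtain x2 where x2: "(v,w) \<in> h {x2}" "x2 \<in> {At_b, At_c}"
      using a(2) unfolding X_def Y_def by blast
    have "(u,w) \<in> h {One, At_a}" by (rule tri0[OF x1(1) x2(1) x1(2) x2(2)])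
    hence "(u,w) \<in> h {One} \<union> h {At_a}" using hOA by simp
    moreover have "h {One} \<inter> h {At_b} = {}" "h {One} \<inter> h {At_c} = {}"
      "h {At_a} \<inter> h {At_b} = {}" "h {At_a} \<inter> h {At_c} = {}" by (rule disj; simp)+
    ultimately show "(u,w) \<notin> X \<union> Y" unfolding X_def Y_def by blast
  qed
  have AA: "\<And>u. u \<in> U \<Longrightarrow> \<exists>w. (u,w) \<in> A"
  proof -
    fix u assume "u \<in> U"
    hence "(u,u) \<in> h {One}" using rep_id[OF rep] by auto
    thus "\<exists>w. (u,w) \<in> A" using rep_in_comp[OF rep comp_values(7)] unfolding A_def by blast
  qed
  have AXX: "\<And>u v. (u,v) \<in> A \<Longrightarrow> \<exists>k. (u,k) \<in> X \<and> (k,v) \<in> X"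
    unfolding A_def X_def by (rule rep_in_comp[OF rep, where z=At_a]) (simp_all add: comp_values)
  have AYY: "\<And>u v. (u,v) \<in> A \<Longrightarrow> \<exists>k. (u,k) \<in> Y \<and> (k,v) \<in> Y"
    unfolding A_def Y_def by (rule rep_in_comp[OF rep, where z=At_a]) (simp_all add: comp_values)
  have AXY: "\<And>u v. (u,v) \<in> A \<Longrightarrow> \<exists>k. (u,k) \<in> X \<and> (k,v) \<in> Y"
    unfolding A_def X_def Y_def by (rule rep_in_comp[OF rep, where z=At_a]) (simp_all add: comp_values)
  have AYX: "\<And>u v. (u,v) \<in> A \<Longrightarrow> \<exists>k. (u,k) \<in> Y \<and> (k,v) \<in> X"
    unfolding A_def X_def Y_def by (rule rep_in_comp[OF rep, where z=At_a]) (simp_all add: comp_values)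
  have AAX: "\<And>u v. (u,v) \<in> A \<Longrightarrow> \<exists>k. (u,k) \<in> A \<and> (k,v) \<in> X"
    unfolding A_def X_def by (rule rep_in_comp[OF rep, where z=At_a]) (simp_all add: comp_values)
  have AAY: "\<And>u v. (u,v) \<in> A \<Longrightarrow> \<exists>k. (u,k) \<in> A \<and> (k,v) \<in> Y"
    unfolding A_def Y_def by (rule rep_in_comp[OF rep, where z=At_a]) (simp_all add: comp_values)
  show False
    by (rule core17[OF fin c17 sub sym irrs disjs part tri AA AXX AYY AXY AYX AAX AAY])
qed

theorem mainTheorem10:
  shows "(17::nat) \<notin> spec_fin"
proof
  assume "(17::nat) \<in> spec_fin"
  then obtain U :: "nat set" and h where "finite U" "card U = 17" "representation U h"
    unfolding spec_fin_def by blast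
  thus False using no_rep17 by blast
qed

end
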